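(* Fix parameters $\tau\in(0,1/100)$ and $M\ge2$, and let $\theta=2+\tau$. Let $G$ be a non-trivial and structured GCD graph with set of primes $\mathcal{P}$ such that \[ \mathcal{R}(G)\subseteq\{p> C_6\} \quad\text{and}\quad \mathcal{R}_+(G)\neq\emptyset. \] Then there is a denominator-exact GCD subgraph $G'$ of $G$ with multiplicative data $(\mathcal{P}',f',g')$ such that: (a) $G'$ is non-trivial and maximal; (b) $\mathcal{P}\subsetneq\mathcal{P}'\subseteq \mathcal{P}\cup \mathcal{R}_+(G)$, $\mathcal{R}_+(G')\subsetneq \mathcal{R}_+(G)$, and $\mathcal{R}_-(G')\subseteq \mathcal{R}_-(G)$; (c) $f'(p)\ge0$ and $g'(p)\ge0$ for all $p\in\mathcal{P}'\setminus\mathcal{P}$; (d) $q(G')\geqslant q(G)\prod_{p\in\mathcal{P}'\setminus\mathcal{P}} (1-\mathbbm{1}_{f'(p)=g'(p)>0}/p)^2 (1-1/p^{1+\frac{\tau}{4}})$.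
   Context: For a prime $p$, $k\in\mathbb{Z}$ and $\rho\in\mathbb{Q}_{>0}$, write $\operatorname{e}_p(\rho)=k$ if $\rho=p^ka/q$ with $a,q\in\mathbb{N}$, $p\nmid aq$. For real $t$, $t^+=\max\{t,0\}$, $t^-=\max\{-t,0\}$. Weighted bipartite graph: $(\mu,\mathcal{V},\mathcal{W},\mathcal{E})$ with $\mu:\mathbb{R}_{>0}\to\mathbb{R}_{>0}$, $\mathcal{V},\mathcal{W}$ finite sets of positive reals, $\mathcal{E}\subseteq\mathcal{V}\times\mathcal{W}$; $\mu(\mathcal{T})=\sum_{t\in\mathcal{T}}\mu(t)$, $\mu(\mathcal{E})=\sum_{(v,w)\in\mathcal{E}}\mu(v)\mu(w)$; edge density $\delta=\mu(\mathcal{E})/(\mu(\mathcal{V})\mu(\mathcal{W}))$ if $\mathcal{E}\neq\emptyset$, else $0$; $\mu^{(\theta)}=\delta^\theta\mu(\mathcal{V})\mu(\mathcal{W})$. A subgraph has $\mathcal{V}'\subseteq\mathcal{V}$, $\mathcal{W}'\subseteq\mathcal{W}$, $\mathcal{E}'\subseteq\mathcal{E}\cap(\mathcal{V}'\times\mathcal{W}')$, same $\mu$. "Maximal" means $\mu^{(\theta)}(G)\ge\mu^{(\theta)}(G')$ for every subgraph $G'$ (with $\theta=2+\tau$). GCD graph: a septuple $G=(\mu,\mathcal{V},\mathcal{W},\mathcal{E},\mathcal{P},f,g)$ where $(\mu,\mathcal{V},\mathcal{W},\mathcal{E})$ is a weighted bipartite graph with $\mathcal{V},\mathcal{W}\subset\mathbb{Q}_{>0}$,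 $\mathcal{P}$ is a set of primes (its "set of primes"; $(\mathcal{P},f,g)$ is its "multiplicative data"), $f,g:\mathcal{P}\to\mathbb{Z}$, and for all $p\in\mathcal{P}$ and all $(a/q,b/r)\in\mathcal{V}\times\mathcal{W}$ with $\gcd(a,q)=\gcd(b,r)=1$: $p^{f^+(p)}\mid a$, $p^{g^+(p)}\mid b$, $p^{f^-(p)}\mid q$, $p^{g^-(p)}\mid r$, and if $(a/q,b/r)\in\mathcal{E}$ then the exact power of $p$ dividing $\gcd(a,b)$ is $p^{\min\{f^+(p),g^+(p)\}}$ and that dividing $\gcd(q,r)$ is $p^{\min\{f^-(p),g^-(p)\}}$. $G$ is non-trivial if $\mathcal{E}\neq\emptyset$. Quality: $q(G)=\mu^{(\theta)}(G)\prod_{p\in\mathcal{P}}p^{|f(p)-g(p)|}$. A GCD subgraph $G'=(\mu,\mathcal{V}',\mathcal{W}',\mathcal{E}',\mathcal{P}',f',g')$ of $G$ has $\mathcal{V}'\subseteq\mathcal{V}$, $\mathcal{W}'\subseteq\mathcal{W}$, $\mathcal{E}'\subseteq\mathcal{E}$, $\mathcal{P}'\supseteq\mathcal{P}$, $f'|_{\mathcal{P}}=f$, $g'|_{\mathcal{P}}=g$. It is denominator-exact if for every $p\in\mathcal{P}'\setminus\mathcal{P}$ and every $(a/q,b/r)\in\mathcal{V}'\times\mathcal{W}'$ with $\gcd(a,q)=\gcd(b,r)=1$, $p^{f'^-(p)}$ exactly divides $q$ and $p^{g'^-(p)}$ exactly divides $r$. $\mathcal{R}(G)$ is the set of primes $p\notin\mathcal{P}$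 for which there is $(a/q,b/r)\in\mathcal{E}$ with $\gcd(a,q)=\gcd(b,r)=1$ and $p\mid\gcd(a,b)\gcd(q,r)$. $G$ is structured if for each $p\in\mathcal{R}(G)$ there is $k_p\in\mathbb{Z}$ with $(\operatorname{e}_p(v)-k_p,\operatorname{e}_p(w)-k_p)\in\{(-1,0),(0,-1),(0,0),(0,1),(1,0)\}$ for all $(v,w)\in\mathcal{E}$. For structured $G$, $\mathcal{R}_+(G)$ is the set of $p\in\mathcal{R}(G)$ with $\operatorname{e}_p(v)\ge0$ and $\operatorname{e}_p(w)\ge0$ for all $(v,w)\in\mathcal{E}$, and $\mathcal{R}_-(G)$ is the set of $p\in\mathcal{R}(G)$ with $\operatorname{e}_p(v)\le0$ and $\operatorname{e}_p(w)\le0$ for all $(v,w)\in\mathcal{E}$. Constants: $C_1=10^4/\tau$, $C_2=10MC_1^3$, $C_4=10^{10}M^2C_2^2$, $C_6=\max\{C_4,10^4MC_2,C_2^{10/\tau}\}$. *)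

theory Defs
  imports Complex_Main "HOL-Computational_Algebra.Computational_Algebra"
begin

definition rnum :: "rat \<Rightarrow> int" where "rnum v = fst (quotient_of v)"
definition rden :: "rat \<Rightarrow> int" where "rden v = snd (quotient_of v)"

definition ep :: "nat \<Rightarrow> rat \<Rightarrow> int" where
  "ep p v = int (multiplicity (int p) (rnum v)) - int (multiplicity (int p) (rden v))"

definition posp :: "int \<Rightarrow> nat" where "posp t = nat t"
definition negp :: "int \<Rightarrow> nat" where "negp t = nat (- t)"

definition wsum :: "(rat \<Rightarrow> real) \<Rightarrow> rat set \<Rightarrow> real" where
  "wsum \<mu> T = (\<Sum>t\<in>T. \<mu> t)"

definition wedges :: "(rat \<Rightarrow> real) \<Rightarrow> (rat \<times> rat) set \<Rightarrow> real" where
  "wedges \<mu> E = (\<Sum>(v,w)\<in>E. \<mu> v * \<mu> w)"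

definition weighted_bipartite :: "(rat \<Rightarrow> real) \<Rightarrow> rat set \<Rightarrow> rat set \<Rightarrow> (rat \<times> rat) set \<Rightarrow> bool" where
  "weighted_bipartite \<mu> V W E \<longleftrightarrow>
     (\<forall>x>0. \<mu> x > 0) \<and> finite V \<and> finite W \<and> V \<subseteq> {x. x > 0} \<and> W \<subseteq> {x. x > 0}
     \<and> E \<subseteq> V \<times> W"

definition density :: "(rat \<Rightarrow> real) \<Rightarrow> rat set \<Rightarrow> rat set \<Rightarrow> (rat \<times> rat) set \<Rightarrow> real" where
  "density \<mu> V W E = (if E \<noteq> {} then wedges \<mu> E / (wsum \<mu> V * wsum \<mu> W) else 0)"

definition mu_theta :: "real \<Rightarrow> (rat \<Rightarrow> real) \<Rightarrow> rat set \<Rightarrow> rat set \<Rightarrow> (rat \<times> rat) set \<Rightarrow> real" where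
  "mu_theta \<theta> \<mu> V W E = density \<mu> V W E powr \<theta> * wsum \<mu> V * wsum \<mu> W"

definition maximal :: "real \<Rightarrow> (rat \<Rightarrow> real) \<Rightarrow> rat set \<Rightarrow> rat set \<Rightarrow> (rat \<times> rat) set \<Rightarrow> bool" where
  "maximal \<theta> \<mu> V W E \<longleftrightarrow>
     (\<forall>V'' W'' E''. V'' \<subseteq> V \<longrightarrow> W'' \<subseteq> W \<longrightarrow> E'' \<subseteq> E \<inter> (V'' \<times> W'') \<longrightarrow>
        mu_theta \<theta> \<mu> V W E \<ge> mu_theta \<theta> \<mu> V'' W'' E'')"

definition gcd_graph ::
  "(rat \<Rightarrow> real) \<Rightarrow> rat set \<Rightarrow> rat set \<Rightarrow> (rat \<times> rat) set \<Rightarrow> nat set \<Rightarrow> (nat \<Rightarrow> int) \<Rightarrow> (nat \<Rightarrow> int) \<Rightarrow> bool" where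
  "gcd_graph \<mu> V W E P f g \<longleftrightarrow>
     weighted_bipartite \<mu> V W E \<and> finite P \<and> (\<forall>p\<in>P. prime p) \<and>
     (\<forall>p\<in>P. \<forall>v\<in>V. \<forall>w\<in>W.
        int p ^ posp (f p) dvd rnum v \<and> int p ^ posp (g p) dvd rnum w \<and>
        int p ^ negp (f p) dvd rden v \<and> int p ^ negp (g p) dvd rden w \<and>
        ((v, w) \<in> E \<longrightarrow>
           multiplicity (int p) (gcd (rnum v) (rnum w)) = min (posp (f p)) (posp (g p)) \<and>
           multiplicity (int p) (gcd (rden v) (rden w)) = min (negp (f p)) (negp (g p))))"

definition quality ::
  "real \<Rightarrow> (rat \<Rightarrow> real) \<Rightarrow> rat set \<Rightarrow> rat set \<Rightarrow> (rat \<times> rat) set \<Rightarrow> nat set \<Rightarrow> (nat \<Rightarrow> int) \<Rightarrow> (nat \<Rightarrow> int) \<Rightarrow> real" where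
  "quality \<theta> \<mu> V W E P f g = mu_theta \<theta> \<mu> V W E * (\<Prod>p\<in>P. real p ^ nat \<bar>f p - g p\<bar>)"

definition gcd_subgraph where
  "gcd_subgraph \<mu> V' W' E' P' f' g' V W E P f g \<longleftrightarrow>
     gcd_graph \<mu> V' W' E' P' f' g' \<and> V' \<subseteq> V \<and> W' \<subseteq> W \<and> E' \<subseteq> E \<and> P \<subseteq> P' \<and>
     (\<forall>p\<in>P. f' p = f p \<and> g' p = g p)"

definition denominator_exact where
  "denominator_exact V' W' P' f' g' P \<longleftrightarrow>
     (\<forall>p\<in>P' - P. (\<forall>v\<in>V'. multiplicity (int p) (rden v) = negp (f' p)) \<and>
                  (\<forall>w\<in>W'. multiplicity (int p) (rden w) = negp (g' p)))"

definition Rset :: "(rat \<times> rat) set \<Rightarrow> nat set \<Rightarrow> nat set" where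
  "Rset E P = {p. prime p \<and> p \<notin> P \<and>
      (\<exists>(v,w)\<in>E. int p dvd gcd (rnum v) (rnum w) * gcd (rden v) (rden w))}"

definition structured :: "(rat \<times> rat) set \<Rightarrow> nat set \<Rightarrow> bool" where
  "structured E P \<longleftrightarrow>
     (\<forall>p\<in>Rset E P. \<exists>k::int. \<forall>(v,w)\<in>E.
        (ep p v - k, ep p w - k) \<in> {(-1,0),(0,-1),(0,0),(0,1),(1,0)})"

definition Rplus :: "(rat \<times> rat) set \<Rightarrow> nat set \<Rightarrow> nat set" where
  "Rplus E P = {p\<in>Rset E P. \<forall>(v,w)\<in>E. ep p v \<ge> 0 \<and> ep p w \<ge> 0}"

definition Rminus :: "(rat \<times> rat) set \<Rightarrow> nat set \<Rightarrow> nat set" where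
  "Rminus E P = {p\<in>Rset E P. \<forall>(v,w)\<in>E. ep p v \<le> 0 \<and> ep p w \<le> 0}"

definition C1 :: "real \<Rightarrow> real" where "C1 \<tau> = 10^4 / \<tau>"
definition C2 :: "real \<Rightarrow> real \<Rightarrow> real" where "C2 \<tau> M = 10 * M * C1 \<tau> ^ 3"
definition C4 :: "real \<Rightarrow> real \<Rightarrow> real" where "C4 \<tau> M = 10^10 * M^2 * C2 \<tau> M ^ 2"
definition C6 :: "real \<Rightarrow> real \<Rightarrow> real" where
  "C6 \<tau> M = Max {C4 \<tau> M, 10^4 * M * C2 \<tau> M, C2 \<tau> M powr (10 / \<tau>)}"

end

theory Submission imports Defs "HOL-Analysis.Analysis" begin

definition FF :: "real \<Rightarrow> real \<Rightarrow> real \<Rightarrow> real" where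
  "FF th e w = (e / w) powr th * w"

lemma FF_alt: assumes "w > 0" "e \<ge> 0" shows "FF th e w = (e/w) powr (th - 1) * e"
proof -
  have "(e/w) powr th = (e/w) powr (th - 1) * (e/w) powr 1"
    by (metis add_diff_cancel_left' diff_add_cancel powr_add)
  also have "\<dots> = (e/w) powr (th - 1) * (e/w)" using assms by simp
  finally show ?thesis using assms unfolding FF_def by (simp add: field_simps)
qed

lemma FF_nonneg: "e \<ge> 0 \<Longrightarrow> w \<ge> 0 \<Longrightarrow> FF th e w \<ge> 0"
  unfolding FF_def by simp

lemma FF_zero1[simp]: "FF th 0 w = 0" unfolding FF_def by simp
lemma FF_zero2[simp]: "FF th e 0 = 0" unfolding FF_def by simp

lemma FF_mono: assumes "th \<ge> 1" "0 \<le> e" "0 < w" "w \<le> w'" shows "FF th e w' \<le> FF th e w"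
proof -
  have "(e/w') powr (th - 1) \<le> (e/w) powr (th - 1)"
    using assms by (intro powr_mono2) (auto intro: divide_left_mono)
  then show ?thesis using assms FF_alt[of w e th] FF_alt[of w' e th]
    by (simp add: mult_right_mono)
qed

lemma FF_subadd:
  assumes th: "th \<ge> 1" and "0 \<le> e1" "0 \<le> e2" "e1 \<le> w1" "e2 \<le> w2"
  shows "FF th (e1 + e2) (w1 + w2) \<le> FF th e1 w1 + FF th e2 w2"
proof (cases "e1 = 0 \<or> e2 = 0")
  case True
  then show ?thesis
  proof
    assume e1: "e1 = 0"
    show ?thesis
    proof (cases "w2 = 0")
      case True then show ?thesis using assms e1 by simp
    next
      case False then show ?thesis using assms e1 FF_mono[of th e2 w2 "w1+w2"] by simp
    qed
  next
    assume e2: "e2 = 0"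
    show ?thesis
    proof (cases "w1 = 0")
      case True then show ?thesis using assms e2 by simp
    next
      case False then show ?thesis using assms e2 FF_mono[of th e1 w1 "w1+w2"] by simp
    qed
  qed
next
  case False
  then have pos: "e1 > 0" "e2 > 0" "w1 > 0" "w2 > 0" using assms by auto
  define t where "t = w2 / (w1 + w2)"
  have t: "0 \<le> t" "t \<le> 1" using pos unfolding t_def by auto
  have t1: "1 - t = w1 / (w1 + w2)" using pos unfolding t_def by (simp add: field_simps)
  have mix: "(1 - t) * (e1/w1) + t * (e2/w2) = (e1+e2)/(w1+w2)"
    unfolding t1 unfolding t_def using pos by (simp add: add_divide_distrib)
  have "((1 - t) *\<^sub>R (e1/w1) + t *\<^sub>R (e2/w2)) powr th \<le> (1 - t) * (e1/w1) powr th + t * (e2/w2) powr th"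
    using convex_onD[OF powr_convex[OF th] t, of "e1/w1" "e2/w2"] pos by simp
  then have "((e1+e2)/(w1+w2)) powr th \<le> (1 - t) * (e1/w1) powr th + t * (e2/w2) powr th"
    using mix by simp
  then have "((e1+e2)/(w1+w2)) powr th * (w1 + w2) \<le> ((1 - t) * (e1/w1) powr th + t * (e2/w2) powr th) * (w1 + w2)"
    using pos by (intro mult_right_mono) auto
  also have "\<dots> = (e1/w1) powr th * ((1-t) * (w1 + w2)) + (e2/w2) powr th * (t * (w1 + w2))"
    by (simp add: algebra_simps)
  also have "\<dots> = (e1/w1) powr th * w1 + (e2/w2) powr th * w2"
    using pos unfolding t1 unfolding t_def by simp
  finally show ?thesis unfolding FF_def .
qed


lemma rden_pos: "rden v > 0"
  unfolding rden_def by (rule quotient_of_denom_pos')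

lemma rcop: "coprime (rnum v) (rden v)"
  unfolding rnum_def rden_def by (rule quotient_of_coprime) simp

lemma rnum_pos: assumes "v > 0" shows "rnum v > 0"
proof -
  have "v = of_int (rnum v) / of_int (rden v)"
    unfolding rnum_def rden_def by (rule quotient_of_div) simp
  then have "0 < rat_of_int (rnum v) / rat_of_int (rden v)" using assms by simp
  then have "0 < rat_of_int (rnum v)" using rden_pos[of v]
    by (simp add: zero_less_divide_iff)
  then show ?thesis by simp
qed

lemma primeI: "prime (p::nat) \<Longrightarrow> prime (int p)" by simp

lemma not_both:
  assumes "prime (p::nat)" "int p dvd rnum v" "int p dvd rden v" shows False
  using coprime_common_divisor[OF rcop assms(2,3)] assms(1)
  by (metis not_prime_unit prime_nat_int_transfer)

lemma ep_nonneg: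
  assumes "prime (p::nat)" "v > 0" "ep p v \<ge> 0"
  shows "multiplicity (int p) (rden v) = 0" "int (multiplicity (int p) (rnum v)) = ep p v"
proof -
  have "prime (int p)" using assms(1) by (simp only: prime_nat_int_transfer)
  then have pu: "\<not> is_unit (int p)" by (metis not_prime_unit)
  show m0: "multiplicity (int p) (rden v) = 0"
  proof (rule ccontr)
    assume "multiplicity (int p) (rden v) \<noteq> 0"
    then have d1: "int p dvd rden v" by (metis not_dvd_imp_multiplicity_0)
    have m: "multiplicity (int p) (rnum v) > 0"
      using assms(3) \<open>multiplicity (int p) (rden v) \<noteq> 0\<close> unfolding ep_def by linarith
    have "rnum v \<noteq> 0" using rnum_pos[OF assms(2)] by simp
    then have d2: "int p dvd rnum v"
      using multiplicity_gt_zero_iff[OF _ pu, of "rnum v"] m by simp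
    show False using not_both[OF assms(1) d2 d1] .
  qed
  then show "int (multiplicity (int p) (rnum v)) = ep p v" unfolding ep_def by simp
qed

lemma ep_num:
  assumes "prime (p::nat)" "v > 0" "int p dvd rnum v"
  shows "ep p v \<ge> 1"
proof -
  have "prime (int p)" using assms(1) by (simp only: prime_nat_int_transfer)
  then have pu: "\<not> is_unit (int p)" by (metis not_prime_unit)
  have "\<not> int p dvd rden v" using not_both assms by blast
  then have "multiplicity (int p) (rden v) = 0" by (rule not_dvd_imp_multiplicity_0)
  moreover have "multiplicity (int p) (rnum v) > 0"
  proof -
    have "rnum v \<noteq> 0" using rnum_pos[OF assms(2)] by simp
    then show ?thesis using multiplicity_gt_zero_iff[of "rnum v" "int p"] pu assms(3) by blast
  qed
  ultimately show ?thesis unfolding ep_def by simp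
qed

lemma ep_den:
  assumes "prime (p::nat)" "v > 0" "int p dvd rden v"
  shows "ep p v \<le> -1"
proof -
  have "prime (int p)" using assms(1) by (simp only: prime_nat_int_transfer)
  then have pu: "\<not> is_unit (int p)" by (metis not_prime_unit)
  have "\<not> int p dvd rnum v" using not_both assms by blast
  then have "multiplicity (int p) (rnum v) = 0" by (rule not_dvd_imp_multiplicity_0)
  moreover have "multiplicity (int p) (rden v) > 0"
  proof -
    have "rden v \<noteq> 0" using rden_pos[of v] by simp
    then show ?thesis using multiplicity_gt_zero_iff[of "rden v" "int p"] pu assms(3) by blast
  qed
  ultimately show ?thesis unfolding ep_def by simp
qed

lemma pow_dvd_num:
  assumes "prime (p::nat)" "v > 0" "0 \<le> a" "a \<le> ep p v"
  shows "int p ^ nat a dvd rnum v"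
proof -
  have "nat a \<le> multiplicity (int p) (rnum v)"
    using ep_nonneg(2)[OF assms(1,2)] assms(3,4) by linarith
  then show ?thesis by (rule multiplicity_dvd')
qed

lemma not_dvd_den:
  assumes "prime (p::nat)" "v > 0" "0 \<le> ep p v"
  shows "\<not> int p dvd rden v"
  using ep_den[OF assms(1,2)] assms(3) by fastforce

lemma mult_gcd_num:
  assumes "prime (p::nat)" "v > 0" "w > 0" "0 \<le> ep p v" "0 \<le> ep p w"
  shows "int (multiplicity (int p) (gcd (rnum v) (rnum w))) = min (ep p v) (ep p w)"
proof -
  have "multiplicity (int p) (gcd (rnum v) (rnum w)) = min (multiplicity (int p) (rnum v)) (multiplicity (int p) (rnum w))"
    using multiplicity_gcd[of "rnum v" "rnum w" "int p"] rnum_pos[OF assms(2)] rnum_pos[OF assms(3)] assms(1) by simp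
  then show ?thesis using ep_nonneg(2)[OF assms(1,2,4)] ep_nonneg(2)[OF assms(1,3,5)] by simp
qed

lemma mult_gcd_den:
  assumes "prime (p::nat)" "v > 0" "0 \<le> ep p v"
  shows "multiplicity (int p) (gcd (rden v) (rden w)) = 0"
  using not_dvd_den[OF assms] by (meson dvd_trans gcd_dvd1 not_dvd_imp_multiplicity_0)


lemma mu_theta_FF: "mu_theta th \<mu> V W E = FF th (wedges \<mu> E) (wsum \<mu> V * wsum \<mu> W)"
  unfolding mu_theta_def Defs.density_def FF_def
  by (cases "E = {}") (auto simp: wedges_def)

lemma mu_theta_empty: "mu_theta th \<mu> V W {} = 0"
  unfolding mu_theta_FF by (simp add: wedges_def)

lemma wsum_nonneg: "(\<And>x. x \<in> A \<Longrightarrow> \<mu> x \<ge> 0) \<Longrightarrow> wsum \<mu> A \<ge> 0"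
  unfolding wsum_def by (rule sum_nonneg) auto

lemma wedges_le:
  assumes "finite A" "finite B" "\<And>x. x \<in> A \<Longrightarrow> \<mu> x \<ge> 0" "\<And>x. x \<in> B \<Longrightarrow> \<mu> x \<ge> 0"
    "E' \<subseteq> A \<times> B"
  shows "wedges \<mu> E' \<le> wsum \<mu> A * wsum \<mu> B"
proof -
  have "wedges \<mu> E' \<le> (\<Sum>(v,w)\<in>A \<times> B. \<mu> v * \<mu> w)"
    unfolding wedges_def using assms
    by (intro sum_mono2) (auto intro!: mult_nonneg_nonneg)
  also have "\<dots> = wsum \<mu> A * wsum \<mu> B"
    unfolding wsum_def sum_product sum.cartesian_product by simp
  finally show ?thesis .
qed

definition pat :: "int \<Rightarrow> int \<Rightarrow> int \<Rightarrow> bool" where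
  "pat k x y \<longleftrightarrow> (x - k, y - k) \<in> {(-1,0),(0,-1),(0,0),(0,1),(1,0)}"

lemma pat_bounds: "pat k x y \<Longrightarrow> k - 1 \<le> x \<and> x \<le> k + 1 \<and> k - 1 \<le> y \<and> y \<le> k + 1"
  unfolding pat_def by auto

lemma pat_pos: "pat k x y \<Longrightarrow> x \<ge> 1 \<Longrightarrow> y \<ge> 1 \<Longrightarrow> k \<ge> 1"
  unfolding pat_def by auto

lemma pat_neg: "pat k x y \<Longrightarrow> x \<le> -1 \<Longrightarrow> y \<le> -1 \<Longrightarrow> k \<le> -1"
  unfolding pat_def by auto

lemma structuredD:
  assumes "structured E P" "q \<in> Rset E P"
  obtains k where "\<And>v w. (v,w) \<in> E \<Longrightarrow> pat k (ep q v) (ep q w)"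
  using assms unfolding structured_def pat_def by fast

lemma prime_dvd_prod_cases:
  assumes "prime (q::nat)" "int q dvd gcd a b * gcd c d"
  shows "int q dvd a \<and> int q dvd b \<or> int q dvd c \<and> int q dvd d"
proof -
  have "prime (int q)" using assms(1) by (simp only: prime_nat_int_transfer)
  then have "int q dvd gcd a b \<or> int q dvd gcd c d" using assms(2) prime_dvd_mult_iff by blast
  then show ?thesis by auto
qed

lemma Rplus_sub:
  assumes st: "structured E P" and sub: "E' \<subseteq> E" "P \<subseteq> P'"
    and pos: "\<And>v w. (v,w) \<in> E \<Longrightarrow> 0 < v \<and> 0 < w"
  shows "Rplus E' P' \<subseteq> Rplus E P"
proof
  fix q assume q: "q \<in> Rplus E' P'"
  then have qR: "q \<in> Rset E' P'" and nn: "\<And>v w. (v,w) \<in> E' \<Longrightarrow> ep q v \<ge> 0 \<and> ep q w \<ge> 0"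
    unfolding Rplus_def by auto
  from qR obtain v w where vw: "(v,w) \<in> E'" and pq: "prime q" "q \<notin> P'"
    and dv: "int q dvd gcd (rnum v) (rnum w) * gcd (rden v) (rden w)"
    unfolding Rset_def by auto
  have vwE: "(v,w) \<in> E" using vw sub by auto
  have qRE: "q \<in> Rset E P" using pq sub vwE dv unfolding Rset_def by auto
  obtain k where k: "\<And>v w. (v,w) \<in> E \<Longrightarrow> pat k (ep q v) (ep q w)" using structuredD[OF st qRE] by blast
  have vp: "0 < v" "0 < w" using pos[OF vwE] by auto
  from prime_dvd_prod_cases[OF pq(1) dv]
  have "int q dvd rnum v \<and> int q dvd rnum w"
  proof
    assume "int q dvd rden v \<and> int q dvd rden w"
    then have "ep q v \<le> -1" using ep_den[OF pq(1) vp(1)] by blast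
    with nn[OF vw] show ?thesis by simp
  qed
  then have "ep q v \<ge> 1" "ep q w \<ge> 1" using ep_num[OF pq(1)] vp by blast+
  then have k1: "k \<ge> 1" using pat_pos k[OF vwE] by blast
  have "\<forall>(x,y)\<in>E. ep q x \<ge> 0 \<and> ep q y \<ge> 0"
  proof (clarify)
    fix x y assume "(x,y) \<in> E"
    from pat_bounds[OF k[OF this]] k1 show "ep q x \<ge> 0 \<and> ep q y \<ge> 0" by linarith
  qed
  with qRE show "q \<in> Rplus E P" unfolding Rplus_def by blast
qed

lemma Rminus_sub:
  assumes st: "structured E P" and sub: "E' \<subseteq> E" "P \<subseteq> P'"
    and pos: "\<And>v w. (v,w) \<in> E \<Longrightarrow> 0 < v \<and> 0 < w"
  shows "Rminus E' P' \<subseteq> Rminus E P"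
proof
  fix q assume q: "q \<in> Rminus E' P'"
  then have qR: "q \<in> Rset E' P'" and nn: "\<And>v w. (v,w) \<in> E' \<Longrightarrow> ep q v \<le> 0 \<and> ep q w \<le> 0"
    unfolding Rminus_def by auto
  from qR obtain v w where vw: "(v,w) \<in> E'" and pq: "prime q" "q \<notin> P'"
    and dv: "int q dvd gcd (rnum v) (rnum w) * gcd (rden v) (rden w)"
    unfolding Rset_def by auto
  have vwE: "(v,w) \<in> E" using vw sub by auto
  have qRE: "q \<in> Rset E P" using pq sub vwE dv unfolding Rset_def by auto
  obtain k where k: "\<And>v w. (v,w) \<in> E \<Longrightarrow> pat k (ep q v) (ep q w)" using structuredD[OF st qRE] by blast
  have vp: "0 < v" "0 < w" using pos[OF vwE] by auto
  from prime_dvd_prod_cases[OF pq(1) dv]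
  have "int q dvd rden v \<and> int q dvd rden w"
  proof
    assume "int q dvd rnum v \<and> int q dvd rnum w"
    then have "ep q v \<ge> 1" using ep_num[OF pq(1) vp(1)] by blast
    with nn[OF vw] show ?thesis by simp
  qed
  then have "ep q v \<le> -1" "ep q w \<le> -1" using ep_den[OF pq(1)] vp by blast+
  then have k1: "k \<le> -1" using pat_neg k[OF vwE] by blast
  have "\<forall>(x,y)\<in>E. ep q x \<le> 0 \<and> ep q y \<le> 0"
  proof (clarify)
    fix x y assume "(x,y) \<in> E"
    from pat_bounds[OF k[OF this]] k1 show "ep q x \<le> 0 \<and> ep q y \<le> 0" by linarith
  qed
  with qRE show "q \<in> Rminus E P" unfolding Rminus_def by blast
qed


lemma finish:
  fixes \<tau> :: real and \<mu> :: "rat \<Rightarrow> real" and V W :: "rat set" and E :: "(rat \<times> rat) set"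
    and P :: "nat set" and f g :: "nat \<Rightarrow> int"
  assumes G: "gcd_graph \<mu> V W E P f g" and st: "structured E P" and pR: "p \<in> Rplus E P"
    and V1: "V1 \<subseteq> V" and W1: "W1 \<subseteq> W" and E1: "E1 \<subseteq> E \<inter> (V1 \<times> W1)"
    and a0: "0 \<le> a0" and b0: "0 \<le> b0"
    and ea: "\<And>v. v \<in> V1 \<Longrightarrow> a0 \<le> ep p v" and eb: "\<And>w. w \<in> W1 \<Longrightarrow> b0 \<le> ep p w"
    and emin: "\<And>v w. (v,w) \<in> E1 \<Longrightarrow> min (ep p v) (ep p w) = min a0 b0"
    and ineq: "mu_theta (2 + \<tau>) \<mu> V W E *
        ((1 - (if a0 = b0 \<and> b0 > 0 then 1 else 0) / real p)^2 * (1 - 1 / real p powr (1 + \<tau> / 4)))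
        \<le> real p ^ nat \<bar>a0 - b0\<bar> * mu_theta (2 + \<tau>) \<mu> V1 W1 E1"
    and ipos: "0 < mu_theta (2 + \<tau>) \<mu> V W E *
        ((1 - (if a0 = b0 \<and> b0 > 0 then 1 else 0) / real p)^2 * (1 - 1 / real p powr (1 + \<tau> / 4)))"
  shows "\<exists>V' W' E' P' f' g'.
      gcd_subgraph \<mu> V' W' E' P' f' g' V W E P f g \<and>
      denominator_exact V' W' P' f' g' P \<and>
      E' \<noteq> {} \<and> maximal (2 + \<tau>) \<mu> V' W' E' \<and>
      P \<subset> P' \<and> P' \<subseteq> P \<union> Rplus E P \<and>
      Rplus E' P' \<subset> Rplus E P \<and> Rminus E' P' \<subseteq> Rminus E P \<and>
      (\<forall>p\<in>P' - P. f' p \<ge> 0 \<and> g' p \<ge> 0) \<and>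
      quality (2 + \<tau>) \<mu> V' W' E' P' f' g' \<ge>
        quality (2 + \<tau>) \<mu> V W E P f g *
        (\<Prod>p\<in>P' - P. (1 - (if f' p = g' p \<and> g' p > 0 then 1 else 0) / real p)^2 *
                       (1 - 1 / real p powr (1 + \<tau> / 4)))"
proof -
  define th where "th = 2 + \<tau>"
  let ?c = "(1 - (if a0 = b0 \<and> b0 > 0 then 1 else 0) / real p)^2 * (1 - 1 / real p powr (1 + \<tau> / 4))"
  have Gu: "weighted_bipartite \<mu> V W E \<and> finite P \<and> (\<forall>q\<in>P. prime q) \<and>
     (\<forall>q\<in>P. \<forall>v\<in>V. \<forall>w\<in>W.
        int q ^ posp (f q) dvd rnum v \<and> int q ^ posp (g q) dvd rnum w \<and>
        int q ^ negp (f q) dvd rden v \<and> int q ^ negp (g q) dvd rden w \<and>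
        ((v, w) \<in> E \<longrightarrow>
           multiplicity (int q) (gcd (rnum v) (rnum w)) = min (posp (f q)) (posp (g q)) \<and>
           multiplicity (int q) (gcd (rden v) (rden w)) = min (negp (f q)) (negp (g q))))"
    using G unfolding gcd_graph_def .
  note wb = Gu[THEN conjunct1]
  note finP = Gu[THEN conjunct2, THEN conjunct1]
  note primP = Gu[THEN conjunct2, THEN conjunct2, THEN conjunct1]
  note gc = Gu[THEN conjunct2, THEN conjunct2, THEN conjunct2]
  have mupos: "\<And>x. x > 0 \<Longrightarrow> \<mu> x > 0" and finV: "finite V" and finW: "finite W"
    and Vpos: "V \<subseteq> {x. x > 0}" and Wpos: "W \<subseteq> {x. x > 0}" and EVW: "E \<subseteq> V \<times> W"
    using wb unfolding weighted_bipartite_def by auto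
  have Epos: "\<And>v w. (v,w) \<in> E \<Longrightarrow> 0 < v \<and> 0 < w" using EVW Vpos Wpos by auto
  have pR': "p \<in> Rset E P" using pR unfolding Rplus_def by auto
  then have pp: "prime p" and pP: "p \<notin> P" unfolding Rset_def by auto
  define S where "S = {(A,B,C). A \<subseteq> V1 \<and> B \<subseteq> W1 \<and> C \<subseteq> E1 \<inter> (A \<times> B)}"
  have finV1: "finite V1" using V1 finV finite_subset by blast
  have finW1: "finite W1" using W1 finW finite_subset by blast
  have "E1 \<subseteq> V1 \<times> W1" using E1 by auto
  then have finE1: "finite E1" using finite_subset finite_cartesian_product[OF finV1 finW1] by blast
  have "S \<subseteq> Pow V1 \<times> Pow W1 \<times> Pow E1" unfolding S_def by auto
  then have finS: "finite S" by (rule finite_subset) (use finV1 finW1 finE1 in auto)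
  have inS: "(V1, W1, E1) \<in> S" using E1 unfolding S_def by auto
  define h where "h = (\<lambda>(A,B,C). mu_theta th \<mu> A B C)"
  define m where "m = Max (h ` S)"
  have "m \<in> h ` S" unfolding m_def using finS inS by (intro Max_in) auto
  then obtain A B C where ABC: "(A,B,C) \<in> S" and hm: "h (A,B,C) = m" by auto
  have hle: "\<And>x. x \<in> S \<Longrightarrow> h x \<le> m" unfolding m_def using finS by (intro Max_ge) auto
  have AV1: "A \<subseteq> V1" and BW1: "B \<subseteq> W1" and CE1: "C \<subseteq> E1" and CAB: "C \<subseteq> A \<times> B"
    using ABC unfolding S_def by auto
  have mmax: "mu_theta th \<mu> V1 W1 E1 \<le> mu_theta th \<mu> A B C"
    using hle[OF inS] hm unfolding h_def by simp
  have maxl: "maximal th \<mu> A B C"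
    unfolding maximal_def
  proof (intro allI impI)
    fix V'' W'' E'' assume "V'' \<subseteq> A" "W'' \<subseteq> B" "E'' \<subseteq> C \<inter> (V'' \<times> W'')"
    then have "(V'', W'', E'') \<in> S" using AV1 BW1 CE1 unfolding S_def by auto
    from hle[OF this] hm show "mu_theta th \<mu> V'' W'' E'' \<le> mu_theta th \<mu> A B C" unfolding h_def by simp
  qed
  have AV: "A \<subseteq> V" and BW: "B \<subseteq> W" and CE: "C \<subseteq> E" using AV1 BW1 CE1 V1 W1 E1 by auto
  have ppos: "real p ^ nat \<bar>a0 - b0\<bar> \<ge> 0" by simp
  have "0 < real p ^ nat \<bar>a0 - b0\<bar> * mu_theta th \<mu> V1 W1 E1" using ipos ineq unfolding th_def by linarith
  then have "0 < mu_theta th \<mu> V1 W1 E1" using ppos by (simp add: zero_less_mult_iff)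
  then have mABC: "0 < mu_theta th \<mu> A B C" using mmax by linarith
  have Cne: "C \<noteq> {}" using mABC mu_theta_empty by force
  define f' where "f' = f(p := a0)"
  define g' where "g' = g(p := b0)"
  define P' where "P' = insert p P"
  have PP': "P' - P = {p}" unfolding P'_def using pP by auto
  have wbA: "weighted_bipartite \<mu> A B C"
  proof -
    have "finite A" using AV finV finite_subset by blast
    moreover have "finite B" using BW finW finite_subset by blast
    ultimately show ?thesis
      using wb AV BW CAB unfolding weighted_bipartite_def by auto
  qed
  have finP': "finite P'" unfolding P'_def using finP by simp
  have prP': "\<forall>q\<in>P'. prime q" unfolding P'_def using primP pp by auto
  have part: "\<forall>q\<in>P'. \<forall>v\<in>A. \<forall>w\<in>B.
        int q ^ posp (f' q) dvd rnum v \<and> int q ^ posp (g' q) dvd rnum w \<and>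
        int q ^ negp (f' q) dvd rden v \<and> int q ^ negp (g' q) dvd rden w \<and>
        ((v, w) \<in> C \<longrightarrow>
           multiplicity (int q) (gcd (rnum v) (rnum w)) = min (posp (f' q)) (posp (g' q)) \<and>
           multiplicity (int q) (gcd (rden v) (rden w)) = min (negp (f' q)) (negp (g' q)))"
  proof (intro ballI)
    fix q v w assume q: "q \<in> P'" and v: "v \<in> A" and w: "w \<in> B"
    have vp: "v > 0" and wp: "w > 0" using v w AV BW Vpos Wpos by auto
    show "int q ^ posp (f' q) dvd rnum v \<and> int q ^ posp (g' q) dvd rnum w \<and>
        int q ^ negp (f' q) dvd rden v \<and> int q ^ negp (g' q) dvd rden w \<and>
        ((v, w) \<in> C \<longrightarrow>
           multiplicity (int q) (gcd (rnum v) (rnum w)) = min (posp (f' q)) (posp (g' q)) \<and>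
           multiplicity (int q) (gcd (rden v) (rden w)) = min (negp (f' q)) (negp (g' q)))"
    proof (cases "q = p")
      case True
      have ev: "a0 \<le> ep p v" using ea v AV1 by auto
      have ew: "b0 \<le> ep p w" using eb w BW1 by auto
      have f'p: "f' q = a0" "g' q = b0" unfolding f'_def g'_def using True by auto
      have neg0: "negp a0 = 0" "negp b0 = 0" unfolding negp_def using a0 b0 by auto
      have d1: "int p ^ posp a0 dvd rnum v" unfolding posp_def using pow_dvd_num[OF pp vp a0 ev] .
      have d2: "int p ^ posp b0 dvd rnum w" unfolding posp_def using pow_dvd_num[OF pp wp b0 ew] .
      have edge: "multiplicity (int p) (gcd (rnum v) (rnum w)) = min (posp a0) (posp b0) \<and>
           multiplicity (int p) (gcd (rden v) (rden w)) = min (negp a0) (negp b0)" if "(v,w) \<in> C"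
      proof -
        have "min (ep p v) (ep p w) = min a0 b0" using emin that CE1 by auto
        then have "int (multiplicity (int p) (gcd (rnum v) (rnum w))) = min a0 b0"
          using mult_gcd_num[OF pp vp wp] ev ew a0 b0 by simp
        then have 1: "multiplicity (int p) (gcd (rnum v) (rnum w)) = min (posp a0) (posp b0)"
          unfolding posp_def using a0 b0 by linarith
        have 2: "multiplicity (int p) (gcd (rden v) (rden w)) = 0"
          using mult_gcd_den[OF pp vp] ev a0 by simp
        show ?thesis using 1 2 neg0 by simp
      qed
      show ?thesis using True f'p neg0 d1 d2 edge by simp
    next
      case False
      then have qP: "q \<in> P" using q unfolding P'_def by auto
      have "f' q = f q" "g' q = g q" unfolding f'_def g'_def using False by auto
      have vV: "v \<in> V" and wW: "w \<in> W" using v w AV BW by auto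
      have H: "int q ^ posp (f q) dvd rnum v \<and> int q ^ posp (g q) dvd rnum w \<and>
        int q ^ negp (f q) dvd rden v \<and> int q ^ negp (g q) dvd rden w \<and>
        ((v, w) \<in> E \<longrightarrow>
           multiplicity (int q) (gcd (rnum v) (rnum w)) = min (posp (f q)) (posp (g q)) \<and>
           multiplicity (int q) (gcd (rden v) (rden w)) = min (negp (f q)) (negp (g q)))"
        using gc qP vV wW by blast
      then show ?thesis using \<open>f' q = f q\<close> \<open>g' q = g q\<close> CE by auto
    qed
  qed
  have gg: "gcd_graph \<mu> A B C P' f' g'"
    unfolding gcd_graph_def by (intro conjI wbA finP' prP' part)
  have gsub: "gcd_subgraph \<mu> A B C P' f' g' V W E P f g"
    unfolding gcd_subgraph_def using gg AV BW CE pP unfolding P'_def f'_def g'_def by auto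
  have dex1: "\<forall>v\<in>A. multiplicity (int p) (rden v) = negp (f' p)"
  proof
    fix v assume v: "v \<in> A"
    have vp: "v > 0" using v AV Vpos by auto
    have "a0 \<le> ep p v" using ea v AV1 by auto
    then show "multiplicity (int p) (rden v) = negp (f' p)"
      using ep_nonneg(1)[OF pp vp] a0 unfolding f'_def negp_def by simp
  qed
  have dex2: "\<forall>w\<in>B. multiplicity (int p) (rden w) = negp (g' p)"
  proof
    fix w assume w: "w \<in> B"
    have wp: "w > 0" using w BW Wpos by auto
    have "b0 \<le> ep p w" using eb w BW1 by auto
    then show "multiplicity (int p) (rden w) = negp (g' p)"
      using ep_nonneg(1)[OF pp wp] b0 unfolding g'_def negp_def by simp
  qed
  have dex: "denominator_exact A B P' f' g' P"
    unfolding denominator_exact_def PP' using dex1 dex2 by simp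
  have PsubP': "P \<subset> P'" unfolding P'_def using pP by auto
  have P'R: "P' \<subseteq> P \<union> Rplus E P" unfolding P'_def using pR by auto
  have Rp: "Rplus C P' \<subset> Rplus E P"
  proof -
    have "Rplus C P' \<subseteq> Rplus E P" using Rplus_sub[OF st CE _ Epos] PsubP' by auto
    moreover have "p \<notin> Rplus C P'" unfolding Rplus_def Rset_def P'_def by auto
    ultimately show ?thesis using pR by auto
  qed
  have Rm: "Rminus C P' \<subseteq> Rminus E P" using Rminus_sub[OF st CE _ Epos] PsubP' by auto
  have nn: "\<forall>q\<in>P' - P. f' q \<ge> 0 \<and> g' q \<ge> 0" unfolding PP' f'_def g'_def using a0 b0 by auto
  define Q where "Q = (\<Prod>q\<in>P. real q ^ nat \<bar>f q - g q\<bar>)"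
  have Q0: "Q \<ge> 0" unfolding Q_def by (intro prod_nonneg) auto
  have qG: "quality th \<mu> V W E P f g = mu_theta th \<mu> V W E * Q" unfolding quality_def Q_def ..
  have "(\<Prod>q\<in>P'. real q ^ nat \<bar>f' q - g' q\<bar>) = real p ^ nat \<bar>a0 - b0\<bar> * (\<Prod>q\<in>P. real q ^ nat \<bar>f' q - g' q\<bar>)"
    unfolding P'_def using finP pP by (simp add: f'_def g'_def)
  also have "(\<Prod>q\<in>P. real q ^ nat \<bar>f' q - g' q\<bar>) = Q"
    unfolding Q_def f'_def g'_def using pP by (intro prod.cong) auto
  finally have qG': "quality th \<mu> A B C P' f' g' = mu_theta th \<mu> A B C * (real p ^ nat \<bar>a0 - b0\<bar> * Q)"
    unfolding quality_def by simp
  have prodp: "(\<Prod>q\<in>P' - P. (1 - (if f' q = g' q \<and> g' q > 0 then 1 else 0) / real q)^2 *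
                       (1 - 1 / real q powr (1 + \<tau> / 4))) = ?c"
    unfolding PP' f'_def g'_def by simp
  have "quality th \<mu> V W E P f g * ?c = (mu_theta th \<mu> V W E * ?c) * Q" unfolding qG by simp
  also have "\<dots> \<le> (real p ^ nat \<bar>a0 - b0\<bar> * mu_theta th \<mu> V1 W1 E1) * Q"
    using ineq Q0 unfolding th_def by (intro mult_right_mono) auto
  also have "\<dots> \<le> (real p ^ nat \<bar>a0 - b0\<bar> * mu_theta th \<mu> A B C) * Q"
    using mmax Q0 ppos by (intro mult_right_mono mult_left_mono) auto
  also have "\<dots> = quality th \<mu> A B C P' f' g'" unfolding qG' by simp
  finally have qual: "quality th \<mu> V W E P f g * ?c \<le> quality th \<mu> A B C P' f' g'" .
  have qfin: "quality th \<mu> A B C P' f' g' \<ge> quality th \<mu> V W E P f g *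
        (\<Prod>q\<in>P' - P. (1 - (if f' q = g' q \<and> g' q > 0 then 1 else 0) / real q)^2 *
                       (1 - 1 / real q powr (1 + \<tau> / 4)))"
    unfolding prodp using qual .
  show ?thesis
    apply (rule exI[of _ A], rule exI[of _ B], rule exI[of _ C], rule exI[of _ P'], rule exI[of _ f'], rule exI[of _ g'])
    using gsub dex Cne maxl PsubP' P'R Rp Rm nn qfin unfolding th_def by blast
qed


lemma keyineq:
  fixes p e G A B C :: real
  assumes p: "p \<ge> 2" and e1: "e * p^2 \<ge> 1" and e2: "e \<le> 1" and G: "G \<ge> 0"
    and sub: "G \<le> A + (B + C)" and hB: "p * B \<le> (1 - e) * G" and hC: "p * C \<le> (1 - e) * G"
  shows "G * ((1 - 1/p)^2 * (1 - e)) \<le> A"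
proof -
  have pp: "p > 0" using p by simp
  have id: "(1 - 1/p)^2 * (1 - e) = (1 - 2*(1-e)/p) + (1 - e - e*p^2)/p^2"
    using pp by (simp add: field_simps power2_eq_square)
  have epos: "e > 0"
  proof (rule ccontr)
    assume "\<not> e > 0"
    then have "e * p^2 \<le> 0" by (simp add: mult_nonpos_nonneg)
    with e1 show False by linarith
  qed
  have "(1 - e - e*p^2)/p^2 \<le> 0" using e1 e2 pp epos by (intro divide_nonpos_pos) auto
  then have h1: "(1 - 1/p)^2 * (1 - e) \<le> 1 - 2*(1-e)/p" using id by linarith
  have b: "B \<le> (1 - e) * G / p" using hB pp by (simp add: pos_le_divide_eq mult.commute)
  have c: "C \<le> (1 - e) * G / p" using hC pp by (simp add: pos_le_divide_eq mult.commute)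
  have h2: "G * (1 - 2*(1-e)/p) \<le> A"
  proof -
    have "G * (1 - 2*(1-e)/p) = G - 2 * ((1 - e) * G / p)" by (simp add: algebra_simps)
    also have "\<dots> \<le> A" using sub b c by linarith
    finally show ?thesis .
  qed
  have "G * ((1 - 1/p)^2 * (1 - e)) \<le> G * (1 - 2*(1-e)/p)" using h1 G by (rule mult_left_mono)
  with h2 show ?thesis by linarith
qed

theorem proposition7p17:
  fixes \<tau> M :: real
    and \<mu> :: "rat \<Rightarrow> real" and V W :: "rat set" and E :: "(rat \<times> rat) set"
    and P :: "nat set" and f g :: "nat \<Rightarrow> int"
  assumes "0 < \<tau>" and "\<tau> < 1/100" and "M \<ge> 2"
    and "gcd_graph \<mu> V W E P f g"
    and "E \<noteq> {}"
    and "structured E P"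
    and "Rset E P \<subseteq> {p. real p > C6 \<tau> M}"
    and "Rplus E P \<noteq> {}"
  shows "\<exists>V' W' E' P' f' g'.
      gcd_subgraph \<mu> V' W' E' P' f' g' V W E P f g \<and>
      denominator_exact V' W' P' f' g' P \<and>
      E' \<noteq> {} \<and> maximal (2 + \<tau>) \<mu> V' W' E' \<and>
      P \<subset> P' \<and> P' \<subseteq> P \<union> Rplus E P \<and>
      Rplus E' P' \<subset> Rplus E P \<and> Rminus E' P' \<subseteq> Rminus E P \<and>
      (\<forall>p\<in>P' - P. f' p \<ge> 0 \<and> g' p \<ge> 0) \<and>
      quality (2 + \<tau>) \<mu> V' W' E' P' f' g' \<ge>
        quality (2 + \<tau>) \<mu> V W E P f g *
        (\<Prod>p\<in>P' - P. (1 - (if f' p = g' p \<and> g' p > 0 then 1 else 0) / real p)^2 *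
                       (1 - 1 / real p powr (1 + \<tau> / 4)))"
proof -
  define th where "th = 2 + \<tau>"
  have th1: "th \<ge> 1" unfolding th_def using assms(1) by simp
  obtain p where pR: "p \<in> Rplus E P" using assms(8) by blast
  have pR': "p \<in> Rset E P" using pR unfolding Rplus_def by auto
  then have pp: "prime p" and pP: "p \<notin> P" unfolding Rset_def by auto
  have nonneg: "\<And>v w. (v,w) \<in> E \<Longrightarrow> ep p v \<ge> 0 \<and> ep p w \<ge> 0"
    using pR unfolding Rplus_def by auto
  from pR' obtain v0 w0 where e0: "(v0,w0) \<in> E"
    and dv: "int p dvd gcd (rnum v0) (rnum w0) * gcd (rden v0) (rden w0)"
    unfolding Rset_def by auto
  obtain k where k: "\<And>v w. (v,w) \<in> E \<Longrightarrow> pat k (ep p v) (ep p w)"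
    using structuredD[OF assms(6) pR'] by blast
  have wb: "weighted_bipartite \<mu> V W E" using assms(4) unfolding gcd_graph_def by blast
  have mupos: "\<And>x. x > 0 \<Longrightarrow> \<mu> x > 0" and finV: "finite V" and finW: "finite W"
    and Vpos: "V \<subseteq> {x. x > 0}" and Wpos: "W \<subseteq> {x. x > 0}" and EVW: "E \<subseteq> V \<times> W"
    using wb unfolding weighted_bipartite_def by auto
  have Epos: "\<And>v w. (v,w) \<in> E \<Longrightarrow> 0 < v \<and> 0 < w" using EVW Vpos Wpos by auto
  have muV: "\<And>x. x \<in> V \<Longrightarrow> \<mu> x \<ge> 0" using mupos Vpos by (simp add: less_imp_le subset_iff)
  have muW: "\<And>x. x \<in> W \<Longrightarrow> \<mu> x \<ge> 0" using mupos Wpos by (simp add: less_imp_le subset_iff)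
  have finE: "finite E" using EVW finite_subset finite_cartesian_product[OF finV finW] by blast
  have v0p: "0 < v0" "0 < w0" using Epos[OF e0] by auto
  have k1: "k \<ge> 1"
  proof -
    from prime_dvd_prod_cases[OF pp dv]
    have "int p dvd rnum v0 \<and> int p dvd rnum w0"
    proof
      assume "int p dvd rden v0 \<and> int p dvd rden w0"
      then have "ep p v0 \<le> -1" using ep_den[OF pp v0p(1)] by blast
      with nonneg[OF e0] show ?thesis by simp
    qed
    then have "ep p v0 \<ge> 1" "ep p w0 \<ge> 1" using ep_num[OF pp] v0p by blast+
    then show ?thesis using pat_pos k[OF e0] by blast
  qed
  define Vm where "Vm = {v\<in>V. ep p v = k - 1}"
  define Vp where "Vp = {v\<in>V. ep p v \<ge> k}"
  define Wm where "Wm = {w\<in>W. ep p w = k - 1}"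
  define Wp where "Wp = {w\<in>W. ep p w \<ge> k}"
  define Ea where "Ea = E \<inter> (Vp \<times> Wp)"
  define Eb where "Eb = E \<inter> (Vm \<times> Wp)"
  define Ec where "Ec = E \<inter> (Vp \<times> Wm)"
  have Eun: "E = Ea \<union> Eb \<union> Ec"
  proof
    show "Ea \<union> Eb \<union> Ec \<subseteq> E" unfolding Ea_def Eb_def Ec_def by auto
    show "E \<subseteq> Ea \<union> Eb \<union> Ec"
    proof
      fix x assume x: "x \<in> E"
      obtain v w where vw: "x = (v,w)" by (cases x)
      have vV: "v \<in> V" and wW: "w \<in> W" using x vw EVW by auto
      have "pat k (ep p v) (ep p w)" using k x vw by blast
      then have "(ep p v = k - 1 \<and> ep p w = k) \<or> (ep p v = k \<and> ep p w = k - 1) \<or> (ep p v \<ge> k \<and> ep p w \<ge> k)"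
        unfolding pat_def by auto
      then show "x \<in> Ea \<union> Eb \<union> Ec"
        using x vw vV wW unfolding Ea_def Eb_def Ec_def Vm_def Vp_def Wm_def Wp_def by auto
    qed
  qed
  have dj1: "Ea \<inter> Eb = {}" unfolding Ea_def Eb_def Vp_def Vm_def by auto
  have dj2: "(Ea \<union> Eb) \<inter> Ec = {}" unfolding Ea_def Eb_def Ec_def Wp_def Wm_def by auto
  have finEa: "finite Ea" "finite Eb" "finite Ec" using finE unfolding Ea_def Eb_def Ec_def by auto
  define a where "a = wedges \<mu> Ea"
  define b where "b = wedges \<mu> Eb"
  define c where "c = wedges \<mu> Ec"
  have Ssum: "wedges \<mu> E = a + (b + c)"
  proof -
    have "wedges \<mu> E = wedges \<mu> (Ea \<union> Eb) + wedges \<mu> Ec"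
      unfolding wedges_def using Eun dj2 finEa by (simp add: sum.union_disjoint)
    also have "wedges \<mu> (Ea \<union> Eb) = a + b"
      unfolding wedges_def a_def b_def using dj1 finEa by (simp add: sum.union_disjoint)
    finally show ?thesis by (simp add: c_def)
  qed
  define X where "X = wsum \<mu> V"
  define Y where "Y = wsum \<mu> W"
  define xm where "xm = wsum \<mu> Vm"
  define xp where "xp = wsum \<mu> Vp"
  define ym where "ym = wsum \<mu> Wm"
  define yp where "yp = wsum \<mu> Wp"
  have nn: "xm \<ge> 0" "xp \<ge> 0" "ym \<ge> 0" "yp \<ge> 0"
    unfolding xm_def xp_def ym_def yp_def Vm_def Vp_def Wm_def Wp_def
    using muV muW by (auto intro!: wsum_nonneg)
  have finVs: "finite Vm" "finite Vp" "finite Wm" "finite Wp"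
    using finV finW unfolding Vm_def Vp_def Wm_def Wp_def by auto
  have Xge: "xm + xp \<le> X"
  proof -
    have "xm + xp = wsum \<mu> (Vm \<union> Vp)"
      unfolding xm_def xp_def wsum_def using finVs
      by (subst sum.union_disjoint) (auto simp: Vm_def Vp_def)
    also have "\<dots> \<le> X" unfolding X_def wsum_def using finV muV
      by (intro sum_mono2) (auto simp: Vm_def Vp_def)
    finally show ?thesis .
  qed
  have Yge: "ym + yp \<le> Y"
  proof -
    have "ym + yp = wsum \<mu> (Wm \<union> Wp)"
      unfolding ym_def yp_def wsum_def using finVs
      by (subst sum.union_disjoint) (auto simp: Wm_def Wp_def)
    also have "\<dots> \<le> Y" unfolding Y_def wsum_def using finW muW
      by (intro sum_mono2) (auto simp: Wm_def Wp_def)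
    finally show ?thesis .
  qed
  have subV: "Vm \<subseteq> V" "Vp \<subseteq> V" "Wm \<subseteq> W" "Wp \<subseteq> W" unfolding Vm_def Vp_def Wm_def Wp_def by auto
  have ba: "a \<le> xp * yp" unfolding a_def xp_def yp_def Ea_def
    using finVs subV muV muW by (intro wedges_le) auto
  have bb: "b \<le> xm * yp" unfolding b_def xm_def yp_def Eb_def
    using finVs subV muV muW by (intro wedges_le) auto
  have bc: "c \<le> xp * ym" unfolding c_def xp_def ym_def Ec_def
    using finVs subV muV muW by (intro wedges_le) auto
  have wn: "\<And>F. F \<subseteq> E \<Longrightarrow> wedges \<mu> F \<ge> 0"
  proof -
    fix F assume "F \<subseteq> E"
    then show "wedges \<mu> F \<ge> 0" unfolding wedges_def using EVW muV muW
      by (intro sum_nonneg) (auto intro!: mult_nonneg_nonneg)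
  qed
  have abc0: "a \<ge> 0" "b \<ge> 0" "c \<ge> 0" unfolding a_def b_def c_def
    using wn unfolding Ea_def Eb_def Ec_def by auto
  have Spos: "wedges \<mu> E > 0"
    unfolding wedges_def using finE assms(5)
  proof (intro sum_pos)
    fix x assume "x \<in> E"
    then obtain v w where "x = (v,w)" "0 < v" "0 < w" using Epos by (cases x) auto
    then show "0 < (case x of (v,w) \<Rightarrow> \<mu> v * \<mu> w)" using mupos by simp
  qed (auto)
  have Xpos: "X > 0" unfolding X_def wsum_def
    using finV e0 EVW mupos Vpos by (intro sum_pos) auto
  have Ypos: "Y > 0" unfolding Y_def wsum_def
    using finW e0 EVW mupos Wpos by (intro sum_pos) auto
  define G0 where "G0 = mu_theta th \<mu> V W E"
  have G0FF: "G0 = FF th (a + (b + c)) (X * Y)" unfolding G0_def mu_theta_FF X_def Y_def Ssum ..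
  have G0pos: "G0 > 0" unfolding G0FF FF_def using Spos Ssum Xpos Ypos by simp
  define T where "T = xp * yp + (xm * yp + xp * ym)"
  have TXY: "T \<le> X * Y"
  proof -
    have "T \<le> (xm + xp) * (ym + yp)" unfolding T_def using nn by (simp add: algebra_simps)
    also have "\<dots> \<le> X * Y" using Xge Yge nn by (intro mult_mono) auto
    finally show ?thesis .
  qed
  have ST: "a + (b + c) \<le> T" unfolding T_def using ba bb bc by linarith
  have Tpos: "T > 0" using ST Spos Ssum by linarith
  have "G0 \<le> FF th (a + (b + c)) T"
    unfolding G0FF using th1 abc0 Tpos TXY by (intro FF_mono) auto
  also have "\<dots> \<le> FF th a (xp * yp) + FF th (b + c) (xm * yp + xp * ym)"
    unfolding T_def using th1 abc0 ba bb bc by (intro FF_subadd) auto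
  also have "FF th (b + c) (xm * yp + xp * ym) \<le> FF th b (xm * yp) + FF th c (xp * ym)"
    using th1 abc0 bb bc by (intro FF_subadd) auto
  finally have Gsub: "G0 \<le> FF th a (xp * yp) + (FF th b (xm * yp) + FF th c (xp * ym))" by simp
  have FA: "mu_theta th \<mu> Vp Wp Ea = FF th a (xp * yp)" unfolding mu_theta_FF a_def xp_def yp_def ..
  have FB: "mu_theta th \<mu> Vm Wp Eb = FF th b (xm * yp)" unfolding mu_theta_FF b_def xm_def yp_def ..
  have FC: "mu_theta th \<mu> Vp Wm Ec = FF th c (xp * ym)" unfolding mu_theta_FF c_def xp_def ym_def ..
  define e where "e = 1 / real p powr (1 + \<tau> / 4)"
  have p2: "real p \<ge> 2" using prime_ge_2_nat[OF pp] by simp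
  have pw1: "real p powr (1 + \<tau> / 4) \<ge> real p"
  proof -
    have "real p powr 1 \<le> real p powr (1 + \<tau> / 4)" using p2 assms(1) by (intro powr_mono) auto
    then show ?thesis using p2 by simp
  qed
  have pw2: "real p powr (1 + \<tau> / 4) \<le> real p ^ 2"
  proof -
    have "real p powr (1 + \<tau> / 4) \<le> real p powr 2" using p2 assms(2) by (intro powr_mono) auto
    then show ?thesis using p2 by (simp add: powr_realpow)
  qed
  have e1: "e * real p ^ 2 \<ge> 1" unfolding e_def using pw2 p2 pw1
    by (simp add: field_simps)
  have e2: "e \<le> 1/2" unfolding e_def using pw1 p2
    by (simp add: field_simps)
  have ne: "\<not> (k - 1 = k \<and> k > 0)" "\<not> (k = k - 1 \<and> k - 1 > 0)" by auto
  have Vmk: "\<And>v. v \<in> Vm \<Longrightarrow> k - 1 \<le> ep p v" unfolding Vm_def by auto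
  have Vpk: "\<And>v. v \<in> Vp \<Longrightarrow> k \<le> ep p v" unfolding Vp_def by auto
  have Wmk: "\<And>v. v \<in> Wm \<Longrightarrow> k - 1 \<le> ep p v" unfolding Wm_def by auto
  have Wpk: "\<And>v. v \<in> Wp \<Longrightarrow> k \<le> ep p v" unfolding Wp_def by auto
  show ?thesis
  proof (cases "(1 - e) * G0 \<le> real p * FF th b (xm * yp)")
    case True
    show ?thesis
    proof (rule finish[OF assms(4) assms(6) pR subV(1) subV(4), of Eb "k - 1" k])
      show "Eb \<subseteq> E \<inter> Vm \<times> Wp" unfolding Eb_def by auto
      show "0 \<le> k - 1" "0 \<le> k" using k1 by auto
    next
      fix v assume "v \<in> Vm" then show "k - 1 \<le> ep p v" by (rule Vmk)
    next
      fix w assume "w \<in> Wp" then show "k \<le> ep p w" by (rule Wpk)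
    next
      fix v w assume "(v,w) \<in> Eb"
      then show "min (ep p v) (ep p w) = min (k - 1) k" unfolding Eb_def Vm_def Wp_def by auto
    next
      show "mu_theta (2 + \<tau>) \<mu> V W E * ((1 - (if k - 1 = k \<and> k > 0 then 1 else 0) / real p)\<^sup>2 *
          (1 - 1 / real p powr (1 + \<tau> / 4))) \<le> real p ^ nat \<bar>k - 1 - k\<bar> * mu_theta (2 + \<tau>) \<mu> Vm Wp Eb"
        using True unfolding FB[unfolded th_def, symmetric] G0_def th_def e_def by (simp add: mult.commute)
      show "0 < mu_theta (2 + \<tau>) \<mu> V W E * ((1 - (if k - 1 = k \<and> k > 0 then 1 else 0) / real p)\<^sup>2 *
          (1 - 1 / real p powr (1 + \<tau> / 4)))"
        using G0pos e2 unfolding G0_def th_def e_def by simp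
    qed
  next
    case nB: False
    show ?thesis
    proof (cases "(1 - e) * G0 \<le> real p * FF th c (xp * ym)")
      case True
      show ?thesis
      proof (rule finish[OF assms(4) assms(6) pR subV(2) subV(3), of Ec k "k - 1"])
        show "Ec \<subseteq> E \<inter> Vp \<times> Wm" unfolding Ec_def by auto
        show "0 \<le> k - 1" "0 \<le> k" using k1 by auto
      next
        fix v assume "v \<in> Vp" then show "k \<le> ep p v" by (rule Vpk)
      next
        fix w assume "w \<in> Wm" then show "k - 1 \<le> ep p w" by (rule Wmk)
      next
        fix v w assume "(v,w) \<in> Ec"
        then show "min (ep p v) (ep p w) = min k (k - 1)" unfolding Ec_def Vp_def Wm_def by auto
      next
        show "mu_theta (2 + \<tau>) \<mu> V W E * ((1 - (if k = k - 1 \<and> k - 1 > 0 then 1 else 0) / real p)\<^sup>2 *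
            (1 - 1 / real p powr (1 + \<tau> / 4))) \<le> real p ^ nat \<bar>k - (k - 1)\<bar> * mu_theta (2 + \<tau>) \<mu> Vp Wm Ec"
          using True unfolding FC[unfolded th_def, symmetric] G0_def th_def e_def by (simp add: mult.commute)
        show "0 < mu_theta (2 + \<tau>) \<mu> V W E * ((1 - (if k = k - 1 \<and> k - 1 > 0 then 1 else 0) / real p)\<^sup>2 *
            (1 - 1 / real p powr (1 + \<tau> / 4)))"
          using G0pos e2 unfolding G0_def th_def e_def by simp
      qed
    next
      case nC: False
      have key: "G0 * ((1 - 1 / real p)^2 * (1 - e)) \<le> FF th a (xp * yp)"
        using keyineq[OF p2 e1 _ _ Gsub] nB nC G0pos e2 by (simp add: mult.commute)
      show ?thesis
      proof (rule finish[OF assms(4) assms(6) pR subV(2) subV(4), of Ea k k])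
        show "Ea \<subseteq> E \<inter> Vp \<times> Wp" unfolding Ea_def by auto
        show "0 \<le> k" "0 \<le> k" using k1 by auto
      next
        fix v assume "v \<in> Vp" then show "k \<le> ep p v" by (rule Vpk)
      next
        fix w assume "w \<in> Wp" then show "k \<le> ep p w" by (rule Wpk)
      next
        fix v w assume vw: "(v,w) \<in> Ea"
        then have "ep p v \<ge> k" "ep p w \<ge> k" unfolding Ea_def Vp_def Wp_def by auto
        moreover have "pat k (ep p v) (ep p w)" using k vw unfolding Ea_def by blast
        ultimately show "min (ep p v) (ep p w) = min k k" unfolding pat_def by auto
      next
        have kk: "(k = k \<and> k > 0) = True" using k1 by simp
        show "mu_theta (2 + \<tau>) \<mu> V W E * ((1 - (if k = k \<and> k > 0 then 1 else 0) / real p)\<^sup>2 *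
            (1 - 1 / real p powr (1 + \<tau> / 4))) \<le> real p ^ nat \<bar>k - k\<bar> * mu_theta (2 + \<tau>) \<mu> Vp Wp Ea"
          using key unfolding kk FA[unfolded th_def, symmetric] G0_def th_def e_def by simp
        have "(1 - 1 / real p)^2 > 0" using p2 by simp
        moreover have "1 - e > 0" using e2 by simp
        ultimately show "0 < mu_theta (2 + \<tau>) \<mu> V W E * ((1 - (if k = k \<and> k > 0 then 1 else 0) / real p)\<^sup>2 *
            (1 - 1 / real p powr (1 + \<tau> / 4)))"
          using G0pos unfolding kk G0_def th_def e_def by simp
      qed
    qed
  qed
qed

end
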